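(* For all $r\ge3$ and all $N$, $$\operatorname{Im}\Big(\phi^{(r-1)}_{N,r}\circ\phi^{(r-2)}_{N,r}|_{\mathbf W_{N,r}}\circ\cdots\circ\phi^{(2)}_{N,r}|_{\mathbf W_{N,r}}\Big)\subseteq\ker\phi^{(r)}_{N,r}\cap\operatorname{Im}\Big(\phi^{(r-1)}_{N,r}\circ\cdots\circ\phi^{(2)}_{N,r}\Big),$$ where the left-hand composition is applied to $\mathbf W_{N,r}$ (for $r=3$ it is $\phi^{(2)}_{N,3}$ applied to $\mathbf W_{N,3}$), and the right-hand composition is applied to $\mathbf V_{N,r}$.
   Context: For integers $N,r\ge1$ let $S_{N,r}=\{(n_1,\dots,n_r)\in\mathbb Z^r:\ n_1+\dots+n_r=N,\ \text{each } n_i\ge3 \text{ odd}\}$; when used as an index set it is ordered lexicographically decreasingly. $\mathbf V_{N,r}$ is the $\mathbb Q$-span of the monomials $x_1^{n_1-1}\cdots x_r^{n_r-1}$ with $(n_1,\dots,n_r)\in S_{N,r}$. $\mathsf{Vect}_{N,r}=\mathbb Q^{S_{N,r}}$ (row vectors), and $\pi:\mathbf V_{N,r}\to\mathsf{Vect}_{N,r}$ is the isomorphism sending $\sum a_{n_1,\dots,n_r}x_1^{n_1-1}\cdots x_r^{n_r-1}$ to $(a_{n_1,\dots,n_r})_{(n_1,\dots,n_r)\in S_{N,r}}$. For $r\ge2$, $\mathbf W_{N,r}=\{P\in\mathbf V_{N,r}: P(x_1,\dots,x_r)=P(x_2-x_1,x_2,x_3,\dots,x_r)-P(x_2-x_1,x_1,x_3,\dots,x_r)\}$.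 Ihara action: for $f\in\mathbb Q[t]$ and a polynomial $g$ in $r-1$ variables, $(f\mathbin{\underline\circ}g)(x_1,\dots,x_r)=f(x_1)g(x_2,\dots,x_r)+\sum_{i=1}^{r-1}\big(f(x_{i+1}-x_i)g(x_1,\dots,\widehat{x_{i+1}},\dots,x_r)-(-1)^{\deg f}f(x_i-x_{i+1})g(x_1,\dots,\widehat{x_i},\dots,x_r)\big)$ (hats denote omitted variables). For positive integers $m_i,n_i$, $e\binom{m_1,\dots,m_r}{n_1,\dots,n_r}$ is the coefficient of $x_1^{n_1-1}\cdots x_r^{n_r-1}$ in $t^{m_1-1}\mathbin{\underline\circ}\,(y_1^{m_2-1}\cdots y_{r-1}^{m_r-1})$. $E_{N,r}$ is the $S_{N,r}\times S_{N,r}$ matrix with $(m,n)$-entry $e\binom{m}{n}$; $F_{N,r}=E_{N,r}-\mathrm{id}$. The restricted totally even part of a polynomial is the sum of its monomials in which every variable $x_1,\dots,x_r$ occurs with even exponent $\ge2$. For $1\le j\le r$, $\phi^{(j)}_{N,r}:\mathbf V_{N,r}\to\mathbf V_{N,r}$ is the linear map sending $Q$ to the restricted totally even part of $Q(x_1,\dots,x_r)+\sum_{i=r-j+1}^{r-1}\big(Q(x_1,\dots,x_{r-j},x_{i+1}-x_i,x_{r-j+1},\dots,\widehat{x_{i+1}},\dots,x_r)-Q(x_1,\dots,x_{r-j},x_{i+1}-x_i,x_{r-j+1},\dots,\widehat{x_i},\dots,x_r)\big)$ (in each term the argument list after $x_{i+1}-x_i$ is $x_{r-j+1},\dots,x_r$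 with one variable omitted). For $2\le j\le r-2$, $\phi^{(j)}_{N,r}$ maps $\mathbf W_{N,r}$ into itself. It is known (Tasaka) that for $r\ge2$ and $P\in\mathbf W_{N,r}$, $\pi(P)F_{N,r}$ lies in the left kernel $\{v: vE_{N,r}=0\}$. *)

theory Defs
  imports Complex_Main "HOL-Library.Poly_Mapping"
begin

text \<open>Multivariate polynomials over Q in variables x_1, x_2, ... (indexed by positive
naturals): a finitely supported map from exponent vectors (finitely supported
nat \<Rightarrow> nat) to rational coefficients.\<close>

type_synonym qpoly = "(nat \<Rightarrow>\<^sub>0 nat) \<Rightarrow>\<^sub>0 rat"

definition Xv :: "nat \<Rightarrow> qpoly" where
  "Xv i = Poly_Mapping.single (Poly_Mapping.single i 1) 1"

definition subst :: "(nat \<Rightarrow> qpoly) \<Rightarrow> qpoly \<Rightarrow> qpoly" where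
  "subst \<sigma> P = (\<Sum>m\<in>Poly_Mapping.keys P. Poly_Mapping.single (0::nat \<Rightarrow>\<^sub>0 nat) (Poly_Mapping.lookup P m) *
        (\<Prod>i\<in>Poly_Mapping.keys (m::nat \<Rightarrow>\<^sub>0 nat). (\<sigma> i) ^ (Poly_Mapping.lookup m i)))"

definition subst_args :: "qpoly list \<Rightarrow> qpoly \<Rightarrow> qpoly" where
  "subst_args args = subst (\<lambda>k. if 1 \<le> k \<and> k \<le> length args then args ! (k - 1) else Xv k)"

definition S :: "nat \<Rightarrow> nat \<Rightarrow> nat list set" where
  "S N r = {n. length n = r \<and> sum_list n = N \<and> (\<forall>i<r. odd (n ! i) \<and> 3 \<le> n ! i)}"

definition mono_exp :: "nat list \<Rightarrow> (nat \<Rightarrow>\<^sub>0 nat)" where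
  "mono_exp n = (\<Sum>i<length n. Poly_Mapping.single (i + 1) (n ! i - 1))"

text \<open>V_{N,r}: the Q-span of these monomials, i.e. polynomials all of whose
monomials are among them.\<close>
definition V :: "nat \<Rightarrow> nat \<Rightarrow> qpoly set" where
  "V N r = {P. Poly_Mapping.keys P \<subseteq> mono_exp ` S N r}"

definition W :: "nat \<Rightarrow> nat \<Rightarrow> qpoly set" where
  "W N r = {P \<in> V N r.
     P = subst (\<lambda>k. if k = 1 then Xv 2 - Xv 1 else Xv k) P
       - subst (\<lambda>k. if k = 1 then Xv 2 - Xv 1 else if k = 2 then Xv 1 else Xv k) P}"

definition rte :: "nat \<Rightarrow> qpoly \<Rightarrow> qpoly" where
  "rte r P = (\<Sum>m\<in>Poly_Mapping.keys P.
      if (\<forall>i\<in>{1..r}. even (Poly_Mapping.lookup m i) \<and> 2 \<le> Poly_Mapping.lookup m i)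
      then Poly_Mapping.single m (Poly_Mapping.lookup P m) else 0)"

definition phi_args :: "nat \<Rightarrow> nat \<Rightarrow> nat \<Rightarrow> nat \<Rightarrow> qpoly list" where
  "phi_args r j i d = map Xv [1..<r - j + 1] @ [Xv (i + 1) - Xv i]
       @ map Xv (remove1 d [r - j + 1..<r + 1])"

definition phi :: "nat \<Rightarrow> nat \<Rightarrow> qpoly \<Rightarrow> qpoly" where
  "phi r j Q = rte r (Q + (\<Sum>i\<in>{r - j + 1..r - 1}.
       subst_args (phi_args r j i (i + 1)) Q - subst_args (phi_args r j i i) Q))"

definition phi_comp :: "nat \<Rightarrow> qpoly \<Rightarrow> qpoly" where
  "phi_comp r Q = fold (\<lambda>j. phi r j) [2..<r] Q"

end

theory Submission
  imports Defs
begin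


definition mon :: "(nat \<Rightarrow> qpoly) \<Rightarrow> (nat \<Rightarrow>\<^sub>0 nat) \<Rightarrow> qpoly" where
  "mon \<sigma> m = (\<Prod>i\<in>Poly_Mapping.keys m. (\<sigma> i) ^ (Poly_Mapping.lookup m i))"

abbreviation cst :: "rat \<Rightarrow> qpoly" where "cst c \<equiv> Poly_Mapping.single 0 c"

lemma subst_mon: "subst \<sigma> P = (\<Sum>m\<in>Poly_Mapping.keys P. cst (Poly_Mapping.lookup P m) * mon \<sigma> m)"
  by (simp add: subst_def mon_def)

lemma mon_superset:
  assumes "finite K" "Poly_Mapping.keys m \<subseteq> K"
  shows "mon \<sigma> m = (\<Prod>i\<in>K. (\<sigma> i) ^ (Poly_Mapping.lookup m i))"
  unfolding mon_def
  by (rule prod.mono_neutral_left) (use assms in \<open>auto simp: in_keys_iff\<close>)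

lemma mon_add: "mon \<sigma> (m + n) = mon \<sigma> m * mon \<sigma> n"
proof -
  let ?K = "Poly_Mapping.keys m \<union> Poly_Mapping.keys n"
  have f: "finite ?K" by simp
  have k: "Poly_Mapping.keys (m + n) \<subseteq> ?K" by (rule keys_add)
  have "mon \<sigma> (m + n) = (\<Prod>i\<in>?K. (\<sigma> i) ^ (Poly_Mapping.lookup (m+n) i))"
    by (rule mon_superset[OF f k])
  also have "\<dots> = (\<Prod>i\<in>?K. (\<sigma> i) ^ (Poly_Mapping.lookup m i) * (\<sigma> i) ^ (Poly_Mapping.lookup n i))"
    by (rule prod.cong[OF refl]) (simp only: lookup_add power_add)
  also have "\<dots> = (\<Prod>i\<in>?K. (\<sigma> i) ^ (Poly_Mapping.lookup m i)) * (\<Prod>i\<in>?K. (\<sigma> i) ^ (Poly_Mapping.lookup n i))"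
    by (rule prod.distrib)
  also have "\<dots> = mon \<sigma> m * mon \<sigma> n"
    using mon_superset[OF f, of m \<sigma>] mon_superset[OF f, of n \<sigma>] by simp
  finally show ?thesis .
qed

lemma mon_zero[simp]: "mon \<sigma> 0 = 1"
  by (simp add: mon_def)

lemma subst_superset:
  assumes "finite K" "Poly_Mapping.keys P \<subseteq> K"
  shows "subst \<sigma> P = (\<Sum>m\<in>K. cst (Poly_Mapping.lookup P m) * mon \<sigma> m)"
  unfolding subst_mon
  by (rule sum.mono_neutral_left) (use assms in \<open>auto simp: in_keys_iff\<close>)

lemma subst_add: "subst \<sigma> (P + Q) = subst \<sigma> P + subst \<sigma> Q"
proof -
  let ?K = "Poly_Mapping.keys P \<union> Poly_Mapping.keys Q"
  have f: "finite ?K" by simp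
  have k: "Poly_Mapping.keys (P + Q) \<subseteq> ?K" by (rule keys_add)
  have "subst \<sigma> (P + Q) = (\<Sum>m\<in>?K. cst (Poly_Mapping.lookup (P+Q) m) * mon \<sigma> m)"
    by (rule subst_superset[OF f k])
  also have "\<dots> = (\<Sum>m\<in>?K. cst (Poly_Mapping.lookup P m) * mon \<sigma> m + cst (Poly_Mapping.lookup Q m) * mon \<sigma> m)"
    by (rule sum.cong[OF refl]) (simp only: lookup_add single_add distrib_right)
  also have "\<dots> = (\<Sum>m\<in>?K. cst (Poly_Mapping.lookup P m) * mon \<sigma> m) + (\<Sum>m\<in>?K. cst (Poly_Mapping.lookup Q m) * mon \<sigma> m)"
    by (rule sum.distrib)
  also have "\<dots> = subst \<sigma> P + subst \<sigma> Q"
    using subst_superset[OF f, of P \<sigma>] subst_superset[OF f, of Q \<sigma>] by simp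
  finally show ?thesis .
qed

lemma subst_zero[simp]: "subst \<sigma> 0 = 0"
  by (simp add: subst_def)

lemma subst_uminus: "subst \<sigma> (- P) = - subst \<sigma> P"
  by (simp add: subst_mon lookup_uminus single_uminus sum_negf)

lemma subst_diff: "subst \<sigma> (P - Q) = subst \<sigma> P - subst \<sigma> Q"
  using subst_add[of \<sigma> P "-Q"] by (simp add: subst_uminus)

lemma subst_sum: "subst \<sigma> (sum f A) = (\<Sum>a\<in>A. subst \<sigma> (f a))"
  by (induction A rule: infinite_finite_induct) (auto simp: subst_add)

lemma subst_single: "subst \<sigma> (Poly_Mapping.single m c) = cst c * mon \<sigma> m"
  by (simp add: subst_def mon_def)

lemma poly_expand: "P = (\<Sum>m\<in>Poly_Mapping.keys P. Poly_Mapping.single m (Poly_Mapping.lookup P m))"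
proof (rule poly_mapping_eqI)
  fix k
  show "Poly_Mapping.lookup P k = Poly_Mapping.lookup (\<Sum>m\<in>Poly_Mapping.keys P. Poly_Mapping.single m (Poly_Mapping.lookup P m)) k"
    by (auto simp: lookup_sum lookup_single when_def in_keys_iff)
qed

lemma cst_mult: "cst (a * b) = cst a * cst b"
  by (simp add: mult_single)

lemma subst_mult: "subst \<sigma> (P * Q) = subst \<sigma> P * subst \<sigma> Q"
proof -
  have e: "P * Q = (\<Sum>m\<in>Poly_Mapping.keys P. \<Sum>n\<in>Poly_Mapping.keys Q.
      Poly_Mapping.single (m + n) (Poly_Mapping.lookup P m * Poly_Mapping.lookup Q n))"
  proof -
    have "P * Q = (\<Sum>m\<in>Poly_Mapping.keys P. Poly_Mapping.single m (Poly_Mapping.lookup P m)) *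
       (\<Sum>n\<in>Poly_Mapping.keys Q. Poly_Mapping.single n (Poly_Mapping.lookup Q n))"
      using poly_expand[of P] poly_expand[of Q] by simp
    also have "\<dots> = (\<Sum>m\<in>Poly_Mapping.keys P. \<Sum>n\<in>Poly_Mapping.keys Q.
      Poly_Mapping.single m (Poly_Mapping.lookup P m) * Poly_Mapping.single n (Poly_Mapping.lookup Q n))"
      by (rule sum_product)
    finally show ?thesis by (simp only: mult_single)
  qed
  have "subst \<sigma> (P * Q) = (\<Sum>m\<in>Poly_Mapping.keys P. \<Sum>n\<in>Poly_Mapping.keys Q.
      cst (Poly_Mapping.lookup P m) * mon \<sigma> m * (cst (Poly_Mapping.lookup Q n) * mon \<sigma> n))"
    unfolding e subst_sum subst_single mon_add cst_mult by (simp only: ac_simps)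
  also have "\<dots> = subst \<sigma> P * subst \<sigma> Q"
    unfolding subst_mon by (rule sum_product[symmetric])
  finally show ?thesis .
qed

lemma subst_cst[simp]: "subst \<sigma> (cst c) = cst c"
  by (simp add: subst_single)

lemma subst_one[simp]: "subst \<sigma> 1 = 1"
  using subst_cst[of \<sigma> 1] by simp

lemma subst_power: "subst \<sigma> (P ^ n) = subst \<sigma> P ^ n"
  by (induction n) (auto simp: subst_mult)

lemma subst_prod: "subst \<sigma> (prod f A) = (\<Prod>a\<in>A. subst \<sigma> (f a))"
  by (induction A rule: infinite_finite_induct) (auto simp: subst_mult)

lemma subst_Xv[simp]: "subst \<sigma> (Xv i) = \<sigma> i"
  by (simp add: Xv_def subst_single mon_def)

lemma subst_subst: "subst \<sigma> (subst \<tau> P) = subst (\<lambda>k. subst \<sigma> (\<tau> k)) P"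
proof -
  have "subst \<sigma> (subst \<tau> P) = subst \<sigma> (\<Sum>m\<in>Poly_Mapping.keys P. cst (Poly_Mapping.lookup P m) * mon \<tau> m)"
    by (simp only: subst_mon[of \<tau> P])
  also have "\<dots> = (\<Sum>m\<in>Poly_Mapping.keys P. cst (Poly_Mapping.lookup P m) * subst \<sigma> (mon \<tau> m))"
    by (simp only: subst_sum subst_mult subst_cst)
  also have "\<dots> = subst (\<lambda>k. subst \<sigma> (\<tau> k)) P"
    by (simp only: subst_mon[of _ P] mon_def subst_prod subst_power)
  finally show ?thesis .
qed

lemma subst_cmult: "subst \<sigma> (cst c * P) = cst c * subst \<sigma> P"
  by (simp add: subst_mult)

lemma Xv_power: "Xv i ^ e = Poly_Mapping.single (Poly_Mapping.single i e) 1"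
  by (induction e) (auto simp: Xv_def mult_single single_add[symmetric] add.commute)

lemma prod_single_gen: "finite A \<Longrightarrow> (\<Prod>i\<in>A. Poly_Mapping.single (g i) (1::rat)) = Poly_Mapping.single (\<Sum>i\<in>A. g i) 1"
  by (induction A rule: finite_induct) (auto simp: mult_single)

lemma mon_Xv: "mon Xv m = Poly_Mapping.single m 1"
proof -
  have "mon Xv m = (\<Prod>i\<in>Poly_Mapping.keys m. Poly_Mapping.single (Poly_Mapping.single i (Poly_Mapping.lookup m i)) 1)"
    by (simp add: mon_def Xv_power)
  also have "\<dots> = Poly_Mapping.single (\<Sum>i\<in>Poly_Mapping.keys m. Poly_Mapping.single i (Poly_Mapping.lookup m i)) (1::rat)"
    by (rule prod_single_gen) simp
  also have "\<dots> = Poly_Mapping.single m 1"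
    using poly_expand[of m] by simp
  finally show ?thesis .
qed

lemma cst_mult_single: "cst c * Poly_Mapping.single m 1 = Poly_Mapping.single m c"
  by (simp add: mult_single)

lemma subst_id: "subst Xv P = P"
  by (simp add: subst_mon mon_Xv cst_mult_single poly_expand[symmetric])

lemma lookup_cst_mult: "Poly_Mapping.lookup (cst c * P) m = c * Poly_Mapping.lookup P m"
proof -
  have "cst c * P = (\<Sum>n\<in>Poly_Mapping.keys P. Poly_Mapping.single n (c * Poly_Mapping.lookup P n))"
    by (subst poly_expand[of P]) (simp add: sum_distrib_left mult_single)
  thus ?thesis
    by (auto simp: lookup_sum lookup_single when_def in_keys_iff sum_distrib_left)
qed




definition sg :: "nat \<Rightarrow> nat \<Rightarrow> nat \<Rightarrow> nat \<Rightarrow> nat \<Rightarrow> qpoly" where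
  "sg s n i d k = (if k \<le> s then Xv k else if k = Suc s then Xv (Suc i) - Xv i
     else if k \<le> n then (if k - 1 < d then Xv (k - 1) else Xv k) else Xv k)"

definition Dd :: "nat \<Rightarrow> nat \<Rightarrow> nat \<Rightarrow> qpoly \<Rightarrow> qpoly" where
  "Dd s n i Q = subst (sg s n i (Suc i)) Q - subst (sg s n i i) Q"

definition Tp :: "nat \<Rightarrow> nat \<Rightarrow> qpoly \<Rightarrow> qpoly" where
  "Tp s n Q = Q + (\<Sum>i\<in>{Suc s..n - 1}. Dd s n i Q)"

lemma remove1_upt: "a \<le> d \<Longrightarrow> d < b \<Longrightarrow> remove1 d [a..<b] = [a..<d] @ [Suc d..<b]"
proof -
  assume h: "a \<le> d" "d < b"
  have "[a..<b] = [a..<d] @ d # [Suc d..<b]"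
  proof -
    have "[a..<b] = [a..<d] @ [d..<b]" using h upt_add_eq_append[of a d "b - d"] by simp
    also have "[d..<b] = d # [Suc d..<b]" using h by (simp add: upt_conv_Cons)
    finally show ?thesis .
  qed
  thus ?thesis by (simp add: remove1_append)
qed

lemma args_eq:
  assumes "r - j + 1 \<le> i" "i \<le> r - 1" "i \<le> d" "d \<le> Suc i" "j \<le> r"
  shows "(\<lambda>k. if 1 \<le> k \<and> k \<le> length (phi_args r j i d) then phi_args r j i d ! (k - 1) else Xv k)
     = sg (r - j) r i d"
proof
  fix k
  define s where "s = r - j"
  have d1: "s + 1 \<le> d" "d < r + 1" using assms s_def by auto
  have pa: "phi_args r j i d = map Xv [1..<s+1] @ [Xv (i + 1) - Xv i] @ map Xv ([s+1..<d] @ [Suc d..<r+1])"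
    unfolding phi_args_def s_def[symmetric] using remove1_upt[OF d1] by simp
  have len: "length (phi_args r j i d) = r" unfolding pa using d1 assms s_def by auto
  have A: "map Xv [1..<s+1] ! t = Xv (Suc t)" if "t < s" for t using that by (simp del: upt_Suc add: nth_upt)
  have B: "([s+1..<d] @ [Suc d..<r+1]) ! t = (if t < d - s - 1 then s + 1 + t else Suc d + (t - (d - s - 1)))"
    if "t < r - s - 1" for t using that d1 by (auto simp: nth_append)
  show "(if 1 \<le> k \<and> k \<le> length (phi_args r j i d) then phi_args r j i d ! (k - 1) else Xv k) = sg (r - j) r i d k"
  proof (cases "k = 0 \<or> k > r")
    case True
    then show ?thesis unfolding len s_def[symmetric] sg_def using d1 by auto
  next
    case False
    hence k: "1 \<le> k" "k \<le> r" by auto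
    show ?thesis
    proof (cases "k \<le> s")
      case True
      have "k - 1 < s" using True k by auto
      then show ?thesis unfolding len s_def[symmetric] sg_def pa using k True A[of "k-1"]
        by (simp add: nth_append del: upt_Suc)
    next
      case False
      show ?thesis
      proof (cases "k = Suc s")
        case True
        then show ?thesis unfolding len s_def[symmetric] sg_def pa using k by (simp add: nth_append)
      next
        case False2: False
        have t: "k - 1 - s - 1 < r - s - 1" using k False False2 by auto
        have l1: "length (map Xv [1..<s+1]) = s" by simp
        have l3: "length ([s+1..<d] @ [Suc d..<r+1]) = r - s - 1" using d1 by auto
        have e1: "k - 1 = length (map Xv [1..<s+1]) + (k - 1 - s)" using k False False2 l1 by simp
        have e2: "k - 1 - s = length [Xv (i + 1) - Xv i] + (k - 1 - s - 1)" using k False False2 by simp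
        have "phi_args r j i d ! (k - 1) = ([Xv (i + 1) - Xv i] @ map Xv ([s+1..<d] @ [Suc d..<r+1])) ! (k - 1 - s)"
          unfolding pa by (subst e1, rule nth_append_length_plus)
        also have "\<dots> = map Xv ([s+1..<d] @ [Suc d..<r+1]) ! (k - 1 - s - 1)"
          by (subst e2, rule nth_append_length_plus)
        also have "\<dots> = Xv (([s+1..<d] @ [Suc d..<r+1]) ! (k - 1 - s - 1))"
          using t l3 by (simp only: nth_map)
        also have "\<dots> = (if k - 1 < d then Xv (k - 1) else Xv k)"
        proof -
          have "s + 1 + (k - 1 - s - 1) = k - 1" "Suc d + (k - 1 - s - 1 - (d - s - 1)) = k"
            if "\<not> (k - 1 - s - 1 < d - s - 1)" using that False False2 k d1 by auto
          moreover have "s + 1 + (k - 1 - s - 1) = k - 1" using False False2 by auto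
          ultimately show ?thesis unfolding B[OF t] using False False2 k d1 by auto
        qed
        finally show ?thesis unfolding len s_def[symmetric] sg_def using k False False2 by simp
      qed
    qed
  qed
qed

lemma phi_Tp: "1 \<le> j \<Longrightarrow> j \<le> r \<Longrightarrow> phi r j Q = rte r (Tp (r - j) r Q)"
  unfolding phi_def Tp_def Dd_def subst_args_def
  apply (rule arg_cong[where f="rte r"])
  apply (rule arg_cong[where f="\<lambda>x. Q + x"])
  apply (rule sum.cong)
   apply force
  subgoal for i
    using args_eq[of r j i "i+1"] args_eq[of r j i i] by auto
  done




definition w1 :: "nat \<Rightarrow> qpoly" where "w1 = (\<lambda>k. if k = 1 then Xv 2 - Xv 1 else Xv k)"
definition w2 :: "nat \<Rightarrow> qpoly" where "w2 = (\<lambda>k. if k = 1 then Xv 2 - Xv 1 else if k = 2 then Xv 1 else Xv k)"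
definition sw :: "nat \<Rightarrow> qpoly" where "sw = (\<lambda>k. if k = 1 then Xv 2 else if k = 2 then Xv 1 else Xv k)"

definition Wrel :: "qpoly \<Rightarrow> bool" where "Wrel Y \<longleftrightarrow> Y = subst w1 Y - subst w2 Y"
definition Anti :: "qpoly \<Rightarrow> bool" where "Anti Y \<longleftrightarrow> subst sw Y = - Y"

definition cmp :: "(nat \<Rightarrow> qpoly) \<Rightarrow> (nat \<Rightarrow> qpoly) \<Rightarrow> nat \<Rightarrow> qpoly" where
  "cmp \<sigma> \<tau> = (\<lambda>k. subst \<sigma> (\<tau> k))"

lemma W_at:
  assumes "Wrel Y"
  shows "subst M Y = subst (M(1 := M 2 - M 1)) Y - subst (M(1 := M 2 - M 1, 2 := M 1)) Y"
proof -
  have "subst M Y = subst M (subst w1 Y - subst w2 Y)" using assms unfolding Wrel_def by simp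
  also have "\<dots> = subst (\<lambda>k. subst M (w1 k)) Y - subst (\<lambda>k. subst M (w2 k)) Y"
    by (simp add: subst_diff subst_subst)
  also have "(\<lambda>k. subst M (w1 k)) = M(1 := M 2 - M 1)"
    by (rule ext) (simp add: w1_def subst_diff)
  also have "(\<lambda>k. subst M (w2 k)) = M(1 := M 2 - M 1, 2 := M 1)"
    by (rule ext) (simp add: w2_def subst_diff)
  finally show ?thesis .
qed

lemma A_at:
  assumes "Anti Y"
  shows "subst (M(1 := M 2, 2 := M 1)) Y = - subst M Y"
proof -
  have "- subst M Y = subst M (subst sw Y)" using assms unfolding Anti_def by (simp add: subst_uminus)
  also have "\<dots> = subst (\<lambda>k. subst M (sw k)) Y" by (simp add: subst_subst)
  also have "(\<lambda>k. subst M (sw k)) = M(1 := M 2, 2 := M 1)"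
    by (rule ext) (simp add: sw_def)
  finally have "- subst M Y = subst (M(1 := M 2, 2 := M 1)) Y" .
  thus ?thesis by (rule sym)
qed

lemma Dd_Dd: "Dd a n i (Dd b m j Y) =
   subst (cmp (sg a n i (Suc i)) (sg b m j (Suc j))) Y - subst (cmp (sg a n i (Suc i)) (sg b m j j)) Y
 - subst (cmp (sg a n i i) (sg b m j (Suc j))) Y + subst (cmp (sg a n i i) (sg b m j j)) Y"
  unfolding Dd_def cmp_def by (simp add: subst_diff subst_subst)

lemma Dd_add: "Dd s n i (P + Q) = Dd s n i P + Dd s n i Q"
  unfolding Dd_def by (simp add: subst_add)
lemma Dd_zero[simp]: "Dd s n i 0 = 0" unfolding Dd_def by simp
lemma Dd_sum: "Dd s n i (sum f A) = (\<Sum>a\<in>A. Dd s n i (f a))"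
proof (induction A rule: infinite_finite_induct)
  case (insert x F)
  then show ?case by (simp add: Dd_add)
qed auto

lemma Tp_add: "Tp s n (P + Q) = Tp s n P + Tp s n Q"
  unfolding Tp_def by (simp add: Dd_add sum.distrib)

lemma sg_Suc: "d \<le> n \<Longrightarrow> sg s (Suc n) i d = sg s n i d"
  by (rule ext) (auto simp: sg_def)

lemma Tp_Suc: assumes "Suc s \<le> n" shows "Tp s (Suc n) Q = Tp s n Q + Dd s (Suc n) n Q"
proof -
  have "{Suc s..Suc n - 1} = insert n {Suc s..n - 1}" using assms by auto
  moreover have "(\<Sum>i\<in>{Suc s..n - 1}. Dd s (Suc n) i Q) = (\<Sum>i\<in>{Suc s..n - 1}. Dd s n i Q)"
    by (rule sum.cong) (auto simp: Dd_def sg_Suc)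
  moreover have "n \<notin> {Suc s..n - 1}" by auto
  ultimately show ?thesis unfolding Tp_def by (simp add: ac_simps)
qed

lemma pairmap:
  assumes "1 \<le> i" "i + 2 \<le> n" "d = i \<or> d = Suc i" "e = n \<or> e = Suc n"
  defines "M \<equiv> cmp (sg 0 (Suc n) n e) (sg 1 (Suc n) (Suc i) (Suc d))"
  shows "cmp (sg 0 n i d) (sg 1 (Suc n) n e) = M(1 := M 2, 2 := M 1)"
  unfolding M_def cmp_def
  by (rule ext) (use assms in \<open>auto simp: sg_def subst_diff\<close>)




lemma firstmap: "2 \<le> n \<Longrightarrow> n \<le> e \<Longrightarrow> sg 1 (Suc n) n e = (sg 0 (Suc n) n e)(1 := sg 0 (Suc n) n e 2, 2 := sg 0 (Suc n) n e 1)"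
  by (rule ext) (auto simp: sg_def)

lemma first_lemma:
  assumes "2 \<le> n" "Anti Y"
  shows "Dd 1 (Suc n) n Y + Dd 0 (Suc n) n Y = 0"
  unfolding Dd_def
  using A_at[OF assms(2), of "sg 0 (Suc n) n (Suc n)"] A_at[OF assms(2), of "sg 0 (Suc n) n n"]
    firstmap[OF assms(1), of "Suc n"] firstmap[OF assms(1), of n]
  by simp

lemma pair_lemma:
  assumes "1 \<le> i" "i + 2 \<le> n" "Anti Y"
  shows "Dd 0 n i (Dd 1 (Suc n) n Y) + Dd 0 (Suc n) n (Dd 1 (Suc n) (Suc i) Y) = 0"
proof -
  have e: "subst (cmp (sg 0 n i d) (sg 1 (Suc n) n e)) Y = - subst (cmp (sg 0 (Suc n) n e) (sg 1 (Suc n) (Suc i) (Suc d))) Y"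
    if "d = i \<or> d = Suc i" "e = n \<or> e = Suc n" for d e
    using pairmap[OF assms(1,2) that] A_at[OF assms(3)] by simp
  show ?thesis
    unfolding Dd_Dd
    using e[of "Suc i" "Suc n"] e[of "Suc i" n] e[of i "Suc n"] e[of i n]
    by simp
qed

lemma last_lemma:
  assumes n: "2 \<le> n" and W: "Wrel Y" and An: "Anti Y"
  shows "Dd 0 n (n - 1) (Dd 1 (Suc n) n Y) + Dd 0 (Suc n) n (Dd 1 (Suc n) n Y) = 0"
proof -
  define A where "A d e = cmp (sg 0 n (n - 1) d) (sg 1 (Suc n) n e)" for d e
  define B where "B d e = cmp (sg 0 (Suc n) n d) (sg 1 (Suc n) n e)" for d e
  have sn: "Suc (n - 1) = n" using n by simp
  have m1: "(A n (Suc n))(1 := A n (Suc n) 2 - A n (Suc n) 1) = B n (Suc n)"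
    unfolding A_def B_def cmp_def by (rule ext) (use n in \<open>auto simp: sg_def subst_diff\<close>)
  have m2: "(A n (Suc n))(1 := A n (Suc n) 2 - A n (Suc n) 1, 2 := A n (Suc n) 1) = B (Suc n) (Suc n)"
    unfolding A_def B_def cmp_def by (rule ext) (use n in \<open>auto simp: sg_def subst_diff\<close>)
  have m3: "(A n n)(1 := A n n 2 - A n n 1) = B n n"
    unfolding A_def B_def cmp_def by (rule ext) (use n in \<open>auto simp: sg_def subst_diff\<close>)
  have m4: "(A n n)(1 := A n n 2 - A n n 1, 2 := A n n 1) = (A (n - 1) n)(1 := A (n - 1) n 2, 2 := A (n - 1) n 1)"
    unfolding A_def B_def cmp_def by (rule ext) (use n in \<open>auto simp: sg_def subst_diff\<close>)
  have m5: "B (Suc n) n = (A (n - 1) (Suc n))(1 := A (n - 1) (Suc n) 2, 2 := A (n - 1) (Suc n) 1)"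
    unfolding A_def B_def cmp_def by (rule ext) (use n in \<open>auto simp: sg_def subst_diff\<close>)
  have f1: "subst (A n (Suc n)) Y = subst (B n (Suc n)) Y - subst (B (Suc n) (Suc n)) Y"
    using W_at[OF W, of "A n (Suc n)"] m1 m2 by simp
  have f2: "subst (A n n) Y = subst (B n n) Y + subst (A (n - 1) n) Y"
    using W_at[OF W, of "A n n"] m3 m4 A_at[OF An, of "A (n - 1) n"] by simp
  have f3: "subst (B (Suc n) n) Y = - subst (A (n - 1) (Suc n)) Y"
    using m5 A_at[OF An, of "A (n - 1) (Suc n)"] by simp
  show ?thesis
    unfolding Dd_Dd sn A_def[symmetric] B_def[symmetric]
    using f1 f2 f3 by simp
qed


lemma core:
  assumes "2 \<le> n" "Wrel Y" "Anti Y"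
  shows "Tp 0 n (Tp 1 n Y) = 0"
  using assms(1)
proof (induction n rule: nat_induct_at_least)
  case base
  have "Tp 1 2 Y = Y" unfolding Tp_def by simp
  moreover have "sg 0 2 1 2 = w2" "sg 0 2 1 1 = w1"
    by (rule ext, auto simp: sg_def w1_def w2_def numeral_2_eq_2)+
  moreover have h: "Y = subst w1 Y - subst w2 Y" using assms(2) unfolding Wrel_def .
  moreover have "Y + (subst w2 Y - subst w1 Y) = 0" by (subst (1) h) simp
  ultimately show ?case unfolding Tp_def Dd_def
    by (simp add: numeral_2_eq_2)
next
  case (Suc n)
  note n = Suc.hyps(1)
  let ?D' = "Dd 1 (Suc n) n" and ?D = "Dd 0 (Suc n) n"
  have t1: "Tp 1 (Suc n) Y = Tp 1 n Y + ?D' Y" using Tp_Suc[of 1 n] n by simp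
  have t0: "Tp 0 (Suc n) Z = Tp 0 n Z + ?D Z" for Z using Tp_Suc[of 0 n] n by simp
  have a1: "Tp 0 (Suc n) (Tp 1 (Suc n) Y) = Tp 0 n (Tp 1 (Suc n) Y) + ?D (Tp 1 (Suc n) Y)" by (rule t0)
  have a2: "Tp 0 n (Tp 1 (Suc n) Y) = Tp 0 n (Tp 1 n Y) + Tp 0 n (?D' Y)" by (simp only: t1 Tp_add)
  have "Tp 0 (Suc n) (Tp 1 (Suc n) Y) = Tp 0 n (?D' Y) + ?D (Tp 1 (Suc n) Y)"
    unfolding a1 a2 using Suc.IH by simp
  also have "Tp 0 n (?D' Y) = ?D' Y + (\<Sum>i\<in>{1..n-1}. Dd 0 n i (?D' Y))"
    unfolding Tp_def by simp
  also have "?D (Tp 1 (Suc n) Y) = ?D Y + (\<Sum>k\<in>{Suc 1..Suc (n-1)}. ?D (Dd 1 (Suc n) k Y))"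
    unfolding Tp_def using n by (simp add: Dd_add Dd_sum)
  also have "(\<Sum>k\<in>{Suc 1..Suc (n-1)}. ?D (Dd 1 (Suc n) k Y)) = (\<Sum>i\<in>{1..n-1}. ?D (Dd 1 (Suc n) (Suc i) Y))"
    by (rule sum.shift_bounds_cl_Suc_ivl)
  finally have "Tp 0 (Suc n) (Tp 1 (Suc n) Y) = (?D' Y + ?D Y) +
     (\<Sum>i\<in>{1..n-1}. Dd 0 n i (?D' Y) + ?D (Dd 1 (Suc n) (Suc i) Y))"
    by (simp add: sum.distrib ac_simps)
  also have "?D' Y + ?D Y = 0" by (rule first_lemma[OF n assms(3)])
  also have "(\<Sum>i\<in>{1..n-1}. Dd 0 n i (?D' Y) + ?D (Dd 1 (Suc n) (Suc i) Y)) = 0"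
  proof (rule sum.neutral, rule ballI)
    fix i assume i: "i \<in> {1..n-1}"
    show "Dd 0 n i (?D' Y) + ?D (Dd 1 (Suc n) (Suc i) Y) = 0"
    proof (cases "i + 2 \<le> n")
      case True
      then show ?thesis using pair_lemma[of i n Y] i assms(3) by simp
    next
      case False
      hence "i = n - 1" using i by auto
      moreover have "Suc (n - 1) = n" using n by simp
      ultimately show ?thesis using last_lemma[OF n assms(2,3)] by simp
    qed
  qed
  finally show ?case by simp
qed




definition Comm :: "(nat \<Rightarrow> qpoly) \<Rightarrow> bool" where
  "Comm \<sigma> \<longleftrightarrow> cmp w1 \<sigma> = cmp \<sigma> w1 \<and> cmp w2 \<sigma> = cmp \<sigma> w2 \<and> cmp sw \<sigma> = cmp \<sigma> sw"

lemma Comm_sg: assumes "2 \<le> s" "Suc s \<le> i" shows "Comm (sg s n i d)"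
  unfolding Comm_def cmp_def
  using assms by (auto intro!: ext simp: sg_def w1_def w2_def sw_def subst_diff)

lemma subst_comm: "cmp \<tau> \<sigma> = cmp \<sigma> \<tau> \<Longrightarrow> subst \<tau> (subst \<sigma> Q) = subst \<sigma> (subst \<tau> Q)"
  unfolding cmp_def by (simp add: subst_subst)

lemma Wrel_subst: "Comm \<sigma> \<Longrightarrow> Wrel Q \<Longrightarrow> Wrel (subst \<sigma> Q)"
  unfolding Wrel_def Comm_def
  by (metis subst_comm subst_diff)

lemma Anti_subst: "Comm \<sigma> \<Longrightarrow> Anti Q \<Longrightarrow> Anti (subst \<sigma> Q)"
  unfolding Anti_def Comm_def
  by (metis subst_comm subst_uminus)

lemma Wrel_add: "Wrel P \<Longrightarrow> Wrel Q \<Longrightarrow> Wrel (P + Q)"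
  unfolding Wrel_def by (simp add: subst_add algebra_simps)
lemma Wrel_diff: "Wrel P \<Longrightarrow> Wrel Q \<Longrightarrow> Wrel (P - Q)"
  unfolding Wrel_def by (simp add: subst_diff algebra_simps)
lemma Wrel_zero: "Wrel 0" unfolding Wrel_def by simp
lemma Wrel_sum: "(\<And>a. a \<in> A \<Longrightarrow> Wrel (f a)) \<Longrightarrow> Wrel (sum f A)"
  by (induction A rule: infinite_finite_induct) (auto simp: Wrel_zero Wrel_add)

lemma Anti_add: "Anti P \<Longrightarrow> Anti Q \<Longrightarrow> Anti (P + Q)"
  unfolding Anti_def by (simp add: subst_add algebra_simps)
lemma Anti_diff: "Anti P \<Longrightarrow> Anti Q \<Longrightarrow> Anti (P - Q)"
  unfolding Anti_def by (simp add: subst_diff algebra_simps)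
lemma Anti_zero: "Anti 0" unfolding Anti_def by simp
lemma Anti_sum: "(\<And>a. a \<in> A \<Longrightarrow> Anti (f a)) \<Longrightarrow> Anti (sum f A)"
  by (induction A rule: infinite_finite_induct) (auto simp: Anti_zero Anti_add)

lemma Wrel_Tp: assumes "2 \<le> s" "Wrel Q" shows "Wrel (Tp s n Q)"
  unfolding Tp_def Dd_def
  using assms Comm_sg[OF assms(1)]
  by (intro Wrel_add Wrel_sum Wrel_diff Wrel_subst) auto

lemma Anti_Tp: assumes "2 \<le> s" "Anti Q" shows "Anti (Tp s n Q)"
  unfolding Tp_def Dd_def
  using assms Comm_sg[OF assms(1)]
  by (intro Anti_add Anti_sum Anti_diff Anti_subst) auto

definition EvenAt :: "nat \<Rightarrow> qpoly \<Rightarrow> bool" where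
  "EvenAt v P \<longleftrightarrow> (\<forall>m\<in>Poly_Mapping.keys P. even (Poly_Mapping.lookup m v))"

definition flip :: "nat \<Rightarrow> nat \<Rightarrow> qpoly" where
  "flip v = (\<lambda>k. if k = v then - Xv v else Xv k)"

lemma EvenAt_flip: assumes "EvenAt v P" shows "subst (flip v) P = P"
proof -
  have "mon (flip v) m = mon Xv m" if "m \<in> Poly_Mapping.keys P" for m
    unfolding mon_def
    by (rule prod.cong[OF refl]) (use assms that in \<open>auto simp: flip_def EvenAt_def\<close>)
  hence "subst (flip v) P = subst Xv P"
    unfolding subst_mon by (intro sum.cong) auto
  thus ?thesis by (simp add: subst_id)
qed

lemma Anti_of_W:
  assumes W: "Wrel P" and E: "EvenAt 1 P"
  shows "Anti P"
proof -
  have fl: "subst (flip 1) P = P" by (rule EvenAt_flip[OF E])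
  have c1: "cmp sw w1 = cmp w2 (flip 1)" unfolding cmp_def
    by (rule ext) (auto simp: sw_def w1_def w2_def flip_def subst_diff subst_uminus)
  have c2: "cmp sw w2 = cmp w1 (flip 1)" unfolding cmp_def
    by (rule ext) (auto simp: sw_def w1_def w2_def flip_def subst_diff subst_uminus)
  have "subst sw P = subst sw (subst w1 P) - subst sw (subst w2 P)"
    using W unfolding Wrel_def by (metis subst_diff)
  also have "subst sw (subst w1 P) = subst w2 (subst (flip 1) P)"
    using c1 unfolding cmp_def by (simp add: subst_subst)
  also have "subst sw (subst w2 P) = subst w1 (subst (flip 1) P)"
    using c2 unfolding cmp_def by (simp add: subst_subst)
  finally have "subst sw P = subst w2 P - subst w1 P" unfolding fl .
  also have "\<dots> = - P" using W unfolding Wrel_def by (metis minus_diff_eq)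
  finally show ?thesis unfolding Anti_def .
qed




definition good :: "nat \<Rightarrow> (nat \<Rightarrow>\<^sub>0 nat) \<Rightarrow> bool" where
  "good r m \<longleftrightarrow> (\<forall>i\<in>{1..r}. even (Poly_Mapping.lookup m i) \<and> 2 \<le> Poly_Mapping.lookup m i)"

lemma lookup_rte: "Poly_Mapping.lookup (rte r P) m = (if good r m then Poly_Mapping.lookup P m else 0)"
proof -
  have "Poly_Mapping.lookup (rte r P) m = (\<Sum>m'\<in>Poly_Mapping.keys P.
      Poly_Mapping.lookup (if good r m' then Poly_Mapping.single m' (Poly_Mapping.lookup P m') else 0) m)"
    unfolding rte_def good_def by (simp add: lookup_sum)
  also have "\<dots> = (\<Sum>m'\<in>Poly_Mapping.keys P. if m' = m then (if good r m then Poly_Mapping.lookup P m else 0) else 0)"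
    by (rule sum.cong) (auto simp: when_def lookup_single)
  also have "\<dots> = (if good r m then Poly_Mapping.lookup P m else 0)"
    by (auto simp: in_keys_iff)
  finally show ?thesis .
qed

lemma rte_add: "rte r (P + Q) = rte r P + rte r Q"
  by (rule poly_mapping_eqI) (simp add: lookup_rte lookup_add)
lemma rte_diff: "rte r (P - Q) = rte r P - rte r Q"
  by (rule poly_mapping_eqI) (simp add: lookup_rte lookup_minus)
lemma rte_zero[simp]: "rte r 0 = 0"
  by (rule poly_mapping_eqI) (simp add: lookup_rte)
lemma rte_sum: "rte r (sum f A) = (\<Sum>a\<in>A. rte r (f a))"
  by (induction A rule: infinite_finite_induct) (auto simp: rte_add)
lemma rte_idem: "rte r (rte r P) = rte r P"
  by (rule poly_mapping_eqI) (simp add: lookup_rte)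
lemma rte_cmult: "rte r (cst c * P) = cst c * rte r P"
  by (rule poly_mapping_eqI) (simp add: lookup_rte lookup_cst_mult)

lemma rte_eq_zero: "(\<And>m. m \<in> Poly_Mapping.keys P \<Longrightarrow> \<not> good r m) \<Longrightarrow> rte r P = 0"
  by (rule poly_mapping_eqI) (auto simp: lookup_rte in_keys_iff)

definition Supp2 :: "nat \<Rightarrow> nat \<Rightarrow> qpoly \<Rightarrow> bool" where
  "Supp2 i d Q \<longleftrightarrow> (\<forall>g\<in>Poly_Mapping.keys Q. (\<forall>t. t \<noteq> i \<and> t \<noteq> Suc i \<longrightarrow> Poly_Mapping.lookup g t = 0)
       \<and> Poly_Mapping.lookup g i + Poly_Mapping.lookup g (Suc i) = d)"

lemma Supp2_mult: "Supp2 i d1 P \<Longrightarrow> Supp2 i d2 Q \<Longrightarrow> Supp2 i (d1 + d2) (P * Q)"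
  unfolding Supp2_def using keys_mult[of P Q] by (fastforce simp: lookup_add)

lemma Supp2_one: "Supp2 i 0 1"
  unfolding Supp2_def by simp

lemma Supp2_power: "Supp2 i d P \<Longrightarrow> Supp2 i (d * e) (P ^ e)"
  by (induction e) (auto simp: Supp2_one dest: Supp2_mult)

lemma Supp2_Xi: "Supp2 i 1 (Xv i)" unfolding Supp2_def Xv_def by (simp add: lookup_single when_def)
lemma Supp2_XSi: "Supp2 i 1 (Xv (Suc i))" unfolding Supp2_def Xv_def by (simp add: lookup_single when_def)
lemma Supp2_D: "Supp2 i 1 (Xv (Suc i) - Xv i)"
  unfolding Supp2_def
proof
  fix g assume "g \<in> Poly_Mapping.keys (Xv (Suc i) - Xv i)"
  hence "g = Poly_Mapping.single i 1 \<or> g = Poly_Mapping.single (Suc i) 1"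
    using keys_diff[of "Xv (Suc i)" "Xv i"] unfolding Xv_def by auto
  thus "(\<forall>t. t \<noteq> i \<and> t \<noteq> Suc i \<longrightarrow> Poly_Mapping.lookup g t = 0) \<and>
       Poly_Mapping.lookup g i + Poly_Mapping.lookup g (Suc i) = 1"
    by (auto simp: lookup_single when_def)
qed

lemma rte_mult_single_zero:
  assumes "\<And>g. g \<in> Poly_Mapping.keys G \<Longrightarrow> \<not> good r (g + \<mu>)"
  shows "rte r (G * Poly_Mapping.single \<mu> 1) = 0"
proof (rule rte_eq_zero)
  fix m assume "m \<in> Poly_Mapping.keys (G * Poly_Mapping.single \<mu> 1)"
  then obtain g where "g \<in> Poly_Mapping.keys G" "m = g + \<mu>"
    using keys_mult[of G "Poly_Mapping.single \<mu> (1::rat)"] by auto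
  thus "\<not> good r m" using assms by simp
qed




definition pim :: "nat \<Rightarrow> nat \<Rightarrow> nat \<Rightarrow> nat" where
  "pim s i k = (if k \<le> s then k else if k \<le> i then k - 1 else k)"

lemma sg_off: "Suc s \<le> i \<Longrightarrow> i < r \<Longrightarrow> k \<noteq> Suc s \<Longrightarrow> k \<noteq> Suc i \<Longrightarrow> d = i \<or> d = Suc i \<Longrightarrow>
    sg s r i d k = Xv (pim s i k)"
  unfolding sg_def pim_def by auto

lemma sg_at_s: "sg s r i d (Suc s) = Xv (Suc i) - Xv i"
  unfolding sg_def by auto

lemma sg_at_i1: "Suc s \<le> i \<Longrightarrow> i < r \<Longrightarrow> sg s r i (Suc i) (Suc i) = Xv i"
  unfolding sg_def by auto
lemma sg_at_i2: "Suc s \<le> i \<Longrightarrow> i < r \<Longrightarrow> sg s r i i (Suc i) = Xv (Suc i)"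
  unfolding sg_def by auto

lemma pim_ne: "Suc s \<le> i \<Longrightarrow> k \<noteq> Suc s \<Longrightarrow> k \<noteq> Suc i \<Longrightarrow> pim s i k \<noteq> i \<and> pim s i k \<noteq> Suc i"
  unfolding pim_def by auto

lemma pim_inj: "Suc s \<le> i \<Longrightarrow> k \<noteq> Suc s \<Longrightarrow> k \<noteq> Suc i \<Longrightarrow> k' \<noteq> Suc s \<Longrightarrow> k' \<noteq> Suc i \<Longrightarrow>
   pim s i k = pim s i k' \<Longrightarrow> k = k'"
  unfolding pim_def by (auto split: if_splits)

lemma pim_range: "Suc s \<le> i \<Longrightarrow> i < r \<Longrightarrow> k \<in> {1..r} \<Longrightarrow> k \<noteq> Suc s \<Longrightarrow> k \<noteq> Suc i \<Longrightarrow> pim s i k \<in> {1..r}"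
  unfolding pim_def by auto

definition muv :: "nat \<Rightarrow> nat \<Rightarrow> (nat \<Rightarrow>\<^sub>0 nat) \<Rightarrow> (nat \<Rightarrow>\<^sub>0 nat)" where
  "muv s i m = (\<Sum>k\<in>Poly_Mapping.keys m - {Suc s, Suc i}. Poly_Mapping.single (pim s i k) (Poly_Mapping.lookup m k))"

lemma lookup_muv: "Poly_Mapping.lookup (muv s i m) t =
    (\<Sum>k\<in>Poly_Mapping.keys m - {Suc s, Suc i}. if pim s i k = t then Poly_Mapping.lookup m k else 0)"
  unfolding muv_def by (simp add: lookup_sum lookup_single when_def)

lemma muv_i: assumes "Suc s \<le> i" shows "Poly_Mapping.lookup (muv s i m) i = 0" "Poly_Mapping.lookup (muv s i m) (Suc i) = 0"
  unfolding lookup_muv using pim_ne[OF assms] by (auto intro!: sum.neutral)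

lemma muv_pim: assumes "Suc s \<le> i" "k0 \<noteq> Suc s" "k0 \<noteq> Suc i"
  shows "Poly_Mapping.lookup (muv s i m) (pim s i k0) = Poly_Mapping.lookup m k0"
proof -
  have "(\<Sum>k\<in>Poly_Mapping.keys m - {Suc s, Suc i}. if pim s i k = pim s i k0 then Poly_Mapping.lookup m k else 0)
      = (\<Sum>k\<in>Poly_Mapping.keys m - {Suc s, Suc i}. if k = k0 then Poly_Mapping.lookup m k else 0)"
    by (rule sum.cong[OF refl]) (use pim_inj[OF assms(1) _ _ assms(2,3)] in auto)
  also have "\<dots> = Poly_Mapping.lookup m k0"
    using assms by (auto simp: in_keys_iff)
  finally show ?thesis unfolding lookup_muv .
qed

lemma mon_decomp:
  assumes "Suc s \<le> i" and off: "\<And>k. k \<noteq> Suc s \<Longrightarrow> k \<noteq> Suc i \<Longrightarrow> \<sigma> k = Xv (pim s i k)"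
  shows "mon \<sigma> m = \<sigma> (Suc s) ^ Poly_Mapping.lookup m (Suc s) * \<sigma> (Suc i) ^ Poly_Mapping.lookup m (Suc i)
      * Poly_Mapping.single (muv s i m) 1"
proof -
  let ?K = "Poly_Mapping.keys m \<union> {Suc s, Suc i}"
  let ?f = "\<lambda>k. \<sigma> k ^ Poly_Mapping.lookup m k"
  have ne: "Suc s \<noteq> Suc i" using assms(1) by simp
  have f: "finite ?K" by simp
  have "mon \<sigma> m = prod ?f ?K" by (rule mon_superset[OF f]) auto
  also have "\<dots> = ?f (Suc s) * prod ?f (?K - {Suc s})"
    by (rule prod.remove[OF f]) simp
  also have "prod ?f (?K - {Suc s}) = ?f (Suc i) * prod ?f (?K - {Suc s} - {Suc i})"
    by (rule prod.remove) (use ne in auto)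
  also have "?K - {Suc s} - {Suc i} = Poly_Mapping.keys m - {Suc s, Suc i}" by auto
  also have "prod ?f (Poly_Mapping.keys m - {Suc s, Suc i}) =
      (\<Prod>k\<in>Poly_Mapping.keys m - {Suc s, Suc i}. Poly_Mapping.single (Poly_Mapping.single (pim s i k) (Poly_Mapping.lookup m k)) 1)"
    by (rule prod.cong[OF refl]) (auto simp: off Xv_power)
  also have "\<dots> = Poly_Mapping.single (muv s i m) 1"
    unfolding muv_def by (rule prod_single_gen) simp
  finally show ?thesis by (simp add: mult.assoc)
qed

lemma not_goodI: "t \<in> {1..r} \<Longrightarrow> odd (Poly_Mapping.lookup x t) \<or> Poly_Mapping.lookup x t < 2 \<Longrightarrow> \<not> good r x"
  unfolding good_def by (metis not_less)

lemma kill_mono: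
  assumes si: "Suc s \<le> i" and ir: "i < r" and bad: "\<not> good r m" and ev: "even (Poly_Mapping.lookup m (Suc s))"
  shows "rte r (mon (sg s r i (Suc i)) m) = rte r (mon (sg s r i i) m)"
proof -
  define a where "a = Poly_Mapping.lookup m (Suc s)"
  define b where "b = Poly_Mapping.lookup m (Suc i)"
  define \<mu> where "\<mu> = muv s i m"
  define Dl where "Dl = Xv (Suc i) - Xv i"
  define Gp where "Gp = Dl ^ a * Xv i ^ b"
  define Gm where "Gm = Dl ^ a * Xv (Suc i) ^ b"
  have mp: "mon (sg s r i (Suc i)) m = Gp * Poly_Mapping.single \<mu> 1"
    unfolding Gp_def Dl_def a_def b_def \<mu>_def
    using mon_decomp[OF si, of "sg s r i (Suc i)" m] sg_off[OF si ir] sg_at_s sg_at_i1[OF si ir] by simp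
  have mm: "mon (sg s r i i) m = Gm * Poly_Mapping.single \<mu> 1"
    unfolding Gm_def Dl_def a_def b_def \<mu>_def
    using mon_decomp[OF si, of "sg s r i i" m] sg_off[OF si ir] sg_at_s sg_at_i2[OF si ir] by simp
  have sp: "Supp2 i (1 * a + 1 * b) Gp" unfolding Gp_def Dl_def
    by (intro Supp2_mult Supp2_power Supp2_D Supp2_Xi)
  have sm: "Supp2 i (1 * a + 1 * b) Gm" unfolding Gm_def Dl_def
    by (intro Supp2_mult Supp2_power Supp2_D Supp2_XSi)
  have i1: "i \<in> {1..r}" "Suc i \<in> {1..r}" using si ir by auto
  have bothzero: "rte r (G * Poly_Mapping.single \<mu> 1) = 0"
    if "Supp2 i (1 * a + 1 * b) G" and C: "(\<exists>k0\<in>{1..r}. k0 \<noteq> Suc s \<and> k0 \<noteq> Suc i \<and> \<not> (even (Poly_Mapping.lookup m k0) \<and> 2 \<le> Poly_Mapping.lookup m k0)) \<or> odd b" for G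
  proof (rule rte_mult_single_zero)
    fix g assume g: "g \<in> Poly_Mapping.keys G"
    have gz: "\<And>t. t \<noteq> i \<Longrightarrow> t \<noteq> Suc i \<Longrightarrow> Poly_Mapping.lookup g t = 0"
      and gs: "Poly_Mapping.lookup g i + Poly_Mapping.lookup g (Suc i) = a + b"
      using that(1) g unfolding Supp2_def by auto
    from C show "\<not> good r (g + \<mu>)"
    proof
      assume "\<exists>k0\<in>{1..r}. k0 \<noteq> Suc s \<and> k0 \<noteq> Suc i \<and> \<not> (even (Poly_Mapping.lookup m k0) \<and> 2 \<le> Poly_Mapping.lookup m k0)"
      then obtain k0 where k0: "k0 \<in> {1..r}" "k0 \<noteq> Suc s" "k0 \<noteq> Suc i"
        "\<not> (even (Poly_Mapping.lookup m k0) \<and> 2 \<le> Poly_Mapping.lookup m k0)" by blast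
      have "Poly_Mapping.lookup (g + \<mu>) (pim s i k0) = Poly_Mapping.lookup m k0"
        using gz[of "pim s i k0"] pim_ne[OF si k0(2,3)] muv_pim[OF si k0(2,3)]
        unfolding \<mu>_def by (simp add: lookup_add)
      thus ?thesis using not_goodI[OF pim_range[OF si ir k0(1-3)], of "g + \<mu>"] k0(4) by auto
    next
      assume "odd b"
      hence "odd (Poly_Mapping.lookup g i) \<or> odd (Poly_Mapping.lookup g (Suc i))"
        using gs ev unfolding a_def by (metis even_add)
      moreover have "Poly_Mapping.lookup (g + \<mu>) i = Poly_Mapping.lookup g i"
        "Poly_Mapping.lookup (g + \<mu>) (Suc i) = Poly_Mapping.lookup g (Suc i)"
        using muv_i[OF si] unfolding \<mu>_def by (simp_all add: lookup_add)
      ultimately show ?thesis using not_goodI[OF i1(1)] not_goodI[OF i1(2)] by metis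
    qed
  qed
  show ?thesis
  proof (cases "(\<exists>k0\<in>{1..r}. k0 \<noteq> Suc s \<and> k0 \<noteq> Suc i \<and> \<not> (even (Poly_Mapping.lookup m k0) \<and> 2 \<le> Poly_Mapping.lookup m k0)) \<or> odd b")
    case True
    then show ?thesis unfolding mp mm using bothzero[OF sp] bothzero[OF sm] by simp
  next
    case False
    hence allgood: "\<And>k0. k0 \<in> {1..r} \<Longrightarrow> k0 \<noteq> Suc s \<Longrightarrow> k0 \<noteq> Suc i \<Longrightarrow> even (Poly_Mapping.lookup m k0) \<and> 2 \<le> Poly_Mapping.lookup m k0"
      and eb: "even b" by auto
    show ?thesis
    proof (cases "b = 0")
      case True
      then show ?thesis unfolding mp mm Gp_def Gm_def by simp
    next
      case False
      hence b2: "2 \<le> b" using eb by presburger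
      have "a = 0"
      proof (rule ccontr)
        assume "a \<noteq> 0"
        hence "2 \<le> a" using ev unfolding a_def by presburger
        hence "good r m" unfolding good_def
          using allgood b2 eb ev unfolding a_def b_def by (metis atLeastAtMost_iff)
        thus False using bad by simp
      qed
      have kp: "Poly_Mapping.keys Gp = {Poly_Mapping.single i b}" unfolding Gp_def \<open>a = 0\<close>
        by (simp add: Xv_power)
      have km: "Poly_Mapping.keys Gm = {Poly_Mapping.single (Suc i) b}" unfolding Gm_def \<open>a = 0\<close>
        by (simp add: Xv_power)
      have "rte r (Gp * Poly_Mapping.single \<mu> 1) = 0"
      proof (rule rte_mult_single_zero)
        fix g assume "g \<in> Poly_Mapping.keys Gp"
        hence "Poly_Mapping.lookup (g + \<mu>) (Suc i) = 0"
          using kp muv_i[OF si] unfolding \<mu>_def by (simp add: lookup_add lookup_single)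
        thus "\<not> good r (g + \<mu>)" using not_goodI[OF i1(2)] by simp
      qed
      moreover have "rte r (Gm * Poly_Mapping.single \<mu> 1) = 0"
      proof (rule rte_mult_single_zero)
        fix g assume "g \<in> Poly_Mapping.keys Gm"
        hence "Poly_Mapping.lookup (g + \<mu>) i = 0"
          using km muv_i[OF si] unfolding \<mu>_def by (simp add: lookup_add lookup_single)
        thus "\<not> good r (g + \<mu>)" using not_goodI[OF i1(1)] by simp
      qed
      ultimately show ?thesis unfolding mp mm by simp
    qed
  qed
qed




section \<open>Killing lemma for Tp\<close>

lemma Dd_diff: "Dd s n i (P - Q) = Dd s n i P - Dd s n i Q"
  unfolding Dd_def by (simp add: subst_diff)
lemma Tp_diff: "Tp s n (P - Q) = Tp s n P - Tp s n Q"
  unfolding Tp_def by (simp add: Dd_diff sum_subtractf)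

lemma rte_subst: "rte r (subst \<sigma> Z) = (\<Sum>m\<in>Poly_Mapping.keys Z. cst (Poly_Mapping.lookup Z m) * rte r (mon \<sigma> m))"
  unfolding subst_mon by (simp add: rte_sum rte_cmult)

lemma kill_Tp:
  assumes sr: "Suc (Suc s) \<le> r" and ev: "EvenAt (Suc s) X"
  shows "rte r (Tp s r (rte r X)) = rte r (Tp s r X)"
proof -
  define Z where "Z = X - rte r X"
  have kz: "\<not> good r m \<and> even (Poly_Mapping.lookup m (Suc s))" if "m \<in> Poly_Mapping.keys Z" for m
  proof -
    have "Poly_Mapping.lookup Z m \<noteq> 0" using that by (simp add: in_keys_iff)
    hence "\<not> good r m" "Poly_Mapping.lookup X m \<noteq> 0"
      unfolding Z_def by (auto simp: lookup_minus lookup_rte split: if_splits)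
    thus ?thesis using ev unfolding EvenAt_def by (auto simp: in_keys_iff)
  qed
  have rz: "rte r Z = 0" unfolding Z_def by (simp add: rte_diff rte_idem)
  have dz: "rte r (Dd s r i Z) = 0" if "i \<in> {Suc s..r - 1}" for i
  proof -
    have "Suc s \<le> i" "i < r" using that sr by auto
    hence "rte r (mon (sg s r i (Suc i)) m) = rte r (mon (sg s r i i) m)" if "m \<in> Poly_Mapping.keys Z" for m
      using kill_mono kz[OF that] by blast
    hence "rte r (subst (sg s r i (Suc i)) Z) = rte r (subst (sg s r i i) Z)"
      unfolding rte_subst by (intro sum.cong) auto
    thus ?thesis unfolding Dd_def by (simp add: rte_diff)
  qed
  have "rte r (Tp s r Z) = 0"
    unfolding Tp_def rte_add rte_sum using rz dz by simp
  thus ?thesis unfolding Z_def Tp_diff rte_diff by simp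
qed

section \<open>Evenness preservation\<close>

definition VF :: "nat \<Rightarrow> qpoly \<Rightarrow> bool" where
  "VF v P \<longleftrightarrow> (\<forall>g\<in>Poly_Mapping.keys P. Poly_Mapping.lookup g v = 0)"

lemma VF_mult: "VF v P \<Longrightarrow> VF v Q \<Longrightarrow> VF v (P * Q)"
  unfolding VF_def using keys_mult[of P Q] by (fastforce simp: lookup_add)
lemma VF_one: "VF v 1" unfolding VF_def by simp
lemma VF_power: "VF v P \<Longrightarrow> VF v (P ^ e)"
  by (induction e) (auto simp: VF_one VF_mult)
lemma VF_Xv: "t \<noteq> v \<Longrightarrow> VF v (Xv t)" unfolding VF_def Xv_def by (simp add: lookup_single when_def)
lemma VF_diff: "VF v P \<Longrightarrow> VF v Q \<Longrightarrow> VF v (P - Q)"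
  unfolding VF_def using keys_diff[of P Q] by blast

lemma EvenAt_mult: "EvenAt v P \<Longrightarrow> EvenAt v Q \<Longrightarrow> EvenAt v (P * Q)"
  unfolding EvenAt_def using keys_mult[of P Q] by (fastforce simp: lookup_add)
lemma EvenAt_one: "EvenAt v 1" unfolding EvenAt_def by simp
lemma EvenAt_prod: "(\<And>a. a \<in> A \<Longrightarrow> EvenAt v (f a)) \<Longrightarrow> EvenAt v (prod f A)"
  by (induction A rule: infinite_finite_induct) (auto simp: EvenAt_one EvenAt_mult)
lemma EvenAt_add: "EvenAt v P \<Longrightarrow> EvenAt v Q \<Longrightarrow> EvenAt v (P + Q)"
  unfolding EvenAt_def using keys_add[of P Q] by blast
lemma EvenAt_diff: "EvenAt v P \<Longrightarrow> EvenAt v Q \<Longrightarrow> EvenAt v (P - Q)"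
  unfolding EvenAt_def using keys_diff[of P Q] by blast
lemma EvenAt_zero: "EvenAt v 0" unfolding EvenAt_def by simp
lemma EvenAt_sum: "(\<And>a. a \<in> A \<Longrightarrow> EvenAt v (f a)) \<Longrightarrow> EvenAt v (sum f A)"
  by (induction A rule: infinite_finite_induct) (auto simp: EvenAt_zero EvenAt_add)
lemma EvenAt_cmult: "EvenAt v P \<Longrightarrow> EvenAt v (cst c * P)"
  unfolding EvenAt_def by (auto simp: in_keys_iff lookup_cst_mult)
lemma VF_EvenAt: "VF v P \<Longrightarrow> EvenAt v P" unfolding VF_def EvenAt_def by simp

lemma EvenAt_subst:
  assumes "EvenAt v Q" "\<sigma> v = Xv v" "\<And>k. k \<noteq> v \<Longrightarrow> VF v (\<sigma> k)"
  shows "EvenAt v (subst \<sigma> Q)"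
  unfolding subst_mon
proof (intro EvenAt_sum EvenAt_cmult)
  fix m assume m: "m \<in> Poly_Mapping.keys Q"
  show "EvenAt v (mon \<sigma> m)" unfolding mon_def
  proof (intro EvenAt_prod)
    fix k assume "k \<in> Poly_Mapping.keys m"
    show "EvenAt v (\<sigma> k ^ Poly_Mapping.lookup m k)"
    proof (cases "k = v")
      case True
      then show ?thesis using assms(1,2) m unfolding EvenAt_def
        by (simp add: Xv_power lookup_single when_def)
    next
      case False
      then show ?thesis using assms(3) by (intro VF_EvenAt VF_power) auto
    qed
  qed
qed

lemma EvenAt_Tp:
  assumes "EvenAt v Q" "1 \<le> v" "v \<le> s"
  shows "EvenAt v (Tp s n Q)"
proof -
  have "EvenAt v (subst (sg s n i d) Q)" if "i \<in> {Suc s..n - 1}" for i d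
  proof (rule EvenAt_subst[OF assms(1)])
    show "sg s n i d v = Xv v" using assms by (simp add: sg_def)
    fix k assume "k \<noteq> v"
    thus "VF v (sg s n i d k)" using that assms
      by (auto simp: sg_def intro!: VF_Xv VF_diff)
  qed
  thus ?thesis unfolding Tp_def Dd_def using assms(1)
    by (intro EvenAt_add EvenAt_sum EvenAt_diff) auto
qed


section \<open>Homogeneity\<close>

definition Hom :: "nat \<Rightarrow> nat \<Rightarrow> qpoly \<Rightarrow> bool" where
  "Hom r d P \<longleftrightarrow> (\<forall>m\<in>Poly_Mapping.keys P. (\<forall>k. k \<notin> {1..r} \<longrightarrow> Poly_Mapping.lookup m k = 0)
      \<and> (\<Sum>k=1..r. Poly_Mapping.lookup m k) = d)"

lemma Hom_mult: "Hom r d1 P \<Longrightarrow> Hom r d2 Q \<Longrightarrow> Hom r (d1 + d2) (P * Q)"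
  unfolding Hom_def using keys_mult[of P Q] by (fastforce simp: lookup_add sum.distrib)
lemma Hom_one: "Hom r 0 1" unfolding Hom_def by simp
lemma Hom_prod: "(\<And>a. a \<in> A \<Longrightarrow> Hom r (d a) (f a)) \<Longrightarrow> Hom r (sum d A) (prod f A)"
  by (induction A rule: infinite_finite_induct) (auto simp: Hom_one Hom_mult)
lemma Hom_power: "Hom r d P \<Longrightarrow> Hom r (d * e) (P ^ e)"
  by (induction e) (auto simp: Hom_one dest: Hom_mult)
lemma Hom_add: "Hom r d P \<Longrightarrow> Hom r d Q \<Longrightarrow> Hom r d (P + Q)"
  unfolding Hom_def using keys_add[of P Q] by blast
lemma Hom_diff: "Hom r d P \<Longrightarrow> Hom r d Q \<Longrightarrow> Hom r d (P - Q)"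
  unfolding Hom_def using keys_diff[of P Q] by blast
lemma Hom_zero: "Hom r d 0" unfolding Hom_def by simp
lemma Hom_sum: "(\<And>a. a \<in> A \<Longrightarrow> Hom r d (f a)) \<Longrightarrow> Hom r d (sum f A)"
  by (induction A rule: infinite_finite_induct) (auto simp: Hom_zero Hom_add)
lemma Hom_cmult: "Hom r d P \<Longrightarrow> Hom r d (cst c * P)"
  unfolding Hom_def by (auto simp: in_keys_iff lookup_cst_mult)
lemma Hom_Xv: "t \<in> {1..r} \<Longrightarrow> Hom r 1 (Xv t)"
  unfolding Hom_def Xv_def by (auto simp: lookup_single when_def)
lemma Hom_Xv': "1 \<le> t \<Longrightarrow> t \<le> r \<Longrightarrow> Hom r (Suc 0) (Xv t)"
  using Hom_Xv[of t r] by simp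
lemma Hom_diff': "Hom r (Suc 0) P \<Longrightarrow> Hom r (Suc 0) Q \<Longrightarrow> Hom r (Suc 0) (P - Q)"
  by (rule Hom_diff)

lemma Hom_rte: "Hom r d P \<Longrightarrow> Hom r d (rte r P)"
  unfolding Hom_def by (auto simp: in_keys_iff lookup_rte split: if_splits)

lemma Hom_subst:
  assumes "Hom r d Q" "\<And>k. k \<in> {1..r} \<Longrightarrow> Hom r 1 (\<sigma> k)"
  shows "Hom r d (subst \<sigma> Q)"
  unfolding subst_mon
proof (intro Hom_sum Hom_cmult)
  fix m assume m: "m \<in> Poly_Mapping.keys Q"
  have z: "\<And>k. k \<notin> {1..r} \<Longrightarrow> Poly_Mapping.lookup m k = 0"
    using assms(1) m unfolding Hom_def by blast
  have sd: "(\<Sum>k=1..r. Poly_Mapping.lookup m k) = d"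
    using assms(1) m unfolding Hom_def by blast
  have ks: "Poly_Mapping.keys m \<subseteq> {1..r}"
  proof
    fix x assume "x \<in> Poly_Mapping.keys m"
    hence "Poly_Mapping.lookup m x \<noteq> 0" by (simp add: in_keys_iff)
    thus "x \<in> {1..r}" using z[of x] by metis
  qed
  have "Hom r (\<Sum>k\<in>Poly_Mapping.keys m. 1 * Poly_Mapping.lookup m k) (mon \<sigma> m)"
    unfolding mon_def
  proof (rule Hom_prod, rule Hom_power)
    fix k assume "k \<in> Poly_Mapping.keys m"
    hence "k \<in> {1..r}" using ks by blast
    thus "Hom r 1 (\<sigma> k)" by (rule assms(2))
  qed
  moreover have "(\<Sum>k\<in>Poly_Mapping.keys m. 1 * Poly_Mapping.lookup m k) = d"
  proof -
    have "(\<Sum>k\<in>Poly_Mapping.keys m. 1 * Poly_Mapping.lookup m k) = (\<Sum>k\<in>Poly_Mapping.keys m. Poly_Mapping.lookup m k)"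
      by simp
    also have "\<dots> = (\<Sum>k\<in>{1..r}. Poly_Mapping.lookup m k)"
      by (rule sum.mono_neutral_left) (use ks in \<open>auto simp: in_keys_iff\<close>)
    finally show ?thesis using sd by simp
  qed
  ultimately show "Hom r d (mon \<sigma> m)" by simp
qed

lemma Hom_Tp:
  assumes "Hom r d Q"
  shows "Hom r d (Tp s r Q)"
proof -
  have "Hom r d (subst (sg s r i d') Q)" if "i \<in> {Suc s..r - 1}" for i d'
  proof (rule Hom_subst[OF assms(1)])
    fix k assume "k \<in> {1..r}"
    thus "Hom r 1 (sg s r i d' k)" using that
      by (auto simp: sg_def intro!: Hom_Xv' Hom_diff')
  qed
  thus ?thesis unfolding Tp_def Dd_def using assms(1)
    by (intro Hom_add Hom_sum Hom_diff) auto
qed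

lemma sum_Suc_lt: "(\<Sum>i<r. Suc (f i)) = (\<Sum>i<r. f i) + (r::nat)"
  by (induction r) auto

lemma lookup_mono_exp: "Poly_Mapping.lookup (mono_exp n) k = (if 1 \<le> k \<and> k \<le> length n then n ! (k - 1) - 1 else 0)"
proof -
  have "Poly_Mapping.lookup (mono_exp n) k = (\<Sum>i<length n. if i + 1 = k then n ! i - 1 else 0)"
    unfolding mono_exp_def lookup_sum by (auto simp: lookup_single when_def intro!: sum.cong)
  also have "\<dots> = (if 1 \<le> k \<and> k \<le> length n then n ! (k - 1) - 1 else 0)"
    by (cases k) (auto simp: sum.delta)
  finally show ?thesis .
qed

lemma V_props:
  assumes "P \<in> V N r" "m \<in> Poly_Mapping.keys P"
  shows "good r m" "\<forall>k. k \<notin> {1..r} \<longrightarrow> Poly_Mapping.lookup m k = 0" "(\<Sum>k=1..r. Poly_Mapping.lookup m k) = N - r"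
proof -
  obtain n where n: "n \<in> S N r" "m = mono_exp n" using assms unfolding V_def by auto
  have ln: "length n = r" and sn: "sum_list n = N" and on: "\<And>i. i < r \<Longrightarrow> odd (n ! i) \<and> 3 \<le> n ! i"
    using n(1) unfolding S_def by auto
  have lk: "Poly_Mapping.lookup m k = (if 1 \<le> k \<and> k \<le> r then n ! (k - 1) - 1 else 0)" for k
    unfolding n(2) lookup_mono_exp ln ..
  show "good r m" unfolding good_def lk
  proof
    fix i assume i: "i \<in> {1..r}"
    hence "i - 1 < r" by auto
    from on[OF this] i show "even (if 1 \<le> i \<and> i \<le> r then n ! (i - 1) - 1 else 0) \<and> 2 \<le> (if 1 \<le> i \<and> i \<le> r then n ! (i - 1) - 1 else 0)"
      by auto
  qed
  show "\<forall>k. k \<notin> {1..r} \<longrightarrow> Poly_Mapping.lookup m k = 0" unfolding lk by auto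
  have "(\<Sum>k=1..r. Poly_Mapping.lookup m k) = (\<Sum>i<r. Poly_Mapping.lookup m (Suc i))"
    using sum.atLeast1_atMost_eq[of "Poly_Mapping.lookup m" r] by simp
  also have "\<dots> = (\<Sum>i<r. n ! i - 1)"
    unfolding lk by (rule sum.cong) auto
  finally have "(\<Sum>k=1..r. Poly_Mapping.lookup m k) = (\<Sum>i<r. n ! i - 1)" .
  moreover have "(\<Sum>i<r. n ! i - 1) + r = N"
  proof -
    have "(\<Sum>i<r. n ! i - 1) + r = (\<Sum>i<r. (n ! i - 1) + 1)" by (simp add: sum_Suc_lt)
    also have "\<dots> = (\<Sum>i<r. n ! i)" by (rule sum.cong) (use on in force)+
    also have "\<dots> = N" using sn ln by (simp add: sum_list_sum_nth atLeast0LessThan)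
    finally show ?thesis .
  qed
  ultimately show "(\<Sum>k=1..r. Poly_Mapping.lookup m k) = N - r" by simp
qed

lemma V_Hom: "P \<in> V N r \<Longrightarrow> Hom r (N - r) P"
  unfolding Hom_def using V_props by blast

lemma V_rte: "P \<in> V N r \<Longrightarrow> rte r P = P"
  by (rule poly_mapping_eqI) (auto simp: lookup_rte in_keys_iff dest: V_props(1))

lemma V_EvenAt: "P \<in> V N r \<Longrightarrow> EvenAt v P"
  unfolding EvenAt_def
proof
  fix m assume P: "P \<in> V N r" and m: "m \<in> Poly_Mapping.keys P"
  show "even (Poly_Mapping.lookup m v)"
  proof (cases "v \<in> {1..r}")
    case True thus ?thesis using V_props(1)[OF P m] unfolding good_def by auto
  next
    case False thus ?thesis using V_props(2)[OF P m] by auto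
  qed
qed

lemma Hom_V:
  assumes "Hom r (N - r) Q" "1 \<le> r"
  shows "rte r Q \<in> V N r"
  unfolding V_def
proof (safe)
  fix m assume "m \<in> Poly_Mapping.keys (rte r Q)"
  hence g: "good r m" and mQ: "m \<in> Poly_Mapping.keys Q" by (auto simp: in_keys_iff lookup_rte split: if_splits)
  have z: "\<And>k. k \<notin> {1..r} \<Longrightarrow> Poly_Mapping.lookup m k = 0" and sd: "(\<Sum>k=1..r. Poly_Mapping.lookup m k) = N - r"
    using assms(1) mQ unfolding Hom_def by auto
  have gk: "\<And>k. k \<in> {1..r} \<Longrightarrow> even (Poly_Mapping.lookup m k) \<and> 2 \<le> Poly_Mapping.lookup m k"
    using g unfolding good_def by auto
  define n where "n = map (\<lambda>i. Poly_Mapping.lookup m (Suc i) + 1) [0..<r]"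
  have ln: "length n = r" unfolding n_def by simp
  have nth_n: "\<And>i. i < r \<Longrightarrow> n ! i = Poly_Mapping.lookup m (Suc i) + 1" unfolding n_def by simp
  have "2 \<le> Poly_Mapping.lookup m 1" using gk[of 1] assms(2) by auto
  hence "2 \<le> (\<Sum>k=1..r. Poly_Mapping.lookup m k)"
    using member_le_sum[of 1 "{1..r}" "Poly_Mapping.lookup m"] assms(2) by auto
  hence Nr: "r \<le> N" using sd by auto
  have "sum_list n = (\<Sum>i<r. Poly_Mapping.lookup m (Suc i) + 1)"
    by (simp add: sum_list_sum_nth ln nth_n atLeast0LessThan)
  also have "\<dots> = (\<Sum>k=1..r. Poly_Mapping.lookup m k) + r"
    using sum.atLeast1_atMost_eq[of "Poly_Mapping.lookup m" r] by (simp add: sum_Suc_lt)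
  also have "\<dots> = N" using sd Nr by simp
  finally have sn: "sum_list n = N" .
  have oi: "odd (n ! i) \<and> 3 \<le> n ! i" if i: "i < r" for i
  proof -
    have "Suc i \<in> {1..r}" using i by auto
    thus ?thesis using gk[of "Suc i"] nth_n[OF i] by auto
  qed
  have "n \<in> S N r" unfolding S_def using ln sn oi by blast
  moreover have "m = mono_exp n"
  proof (rule poly_mapping_eqI)
    fix k
    show "Poly_Mapping.lookup m k = Poly_Mapping.lookup (mono_exp n) k"
      unfolding lookup_mono_exp ln using z nth_n by (cases k) auto
  qed
  ultimately show "m \<in> mono_exp ` S N r" by blast
qed


definition Xs :: "nat \<Rightarrow> qpoly \<Rightarrow> nat \<Rightarrow> qpoly" where
  "Xs r P k = fold (\<lambda>j. Tp (r - j) r) [2..<Suc k] P"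

lemma Xs_Suc: "1 \<le> k \<Longrightarrow> Xs r P (Suc k) = Tp (r - Suc k) r (Xs r P k)"
  unfolding Xs_def by simp

lemma fold_phi_Suc: "1 \<le> k \<Longrightarrow> fold (\<lambda>j. phi r j) [2..<Suc (Suc k)] P = phi r (Suc k) (fold (\<lambda>j. phi r j) [2..<Suc k] P)"
  by simp

lemma W_Wrel: "P \<in> W N r \<Longrightarrow> Wrel P"
  unfolding W_def Wrel_def w1_def w2_def by simp

lemma chain:
  assumes P: "P \<in> W N r" and k: "1 \<le> k" "k \<le> r - 1"
  shows "fold (\<lambda>j. phi r j) [2..<Suc k] P = rte r (Xs r P k) \<and> (\<forall>v. 1 \<le> v \<and> v \<le> r - k \<longrightarrow> EvenAt v (Xs r P k))
     \<and> Hom r (N - r) (Xs r P k) \<and> (k \<le> r - 2 \<longrightarrow> Wrel (Xs r P k) \<and> Anti (Xs r P k))"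
  using k
proof (induction k rule: nat_induct_at_least)
  case base
  have PV: "P \<in> V N r" using P unfolding W_def by simp
  have x1: "Xs r P 1 = P" unfolding Xs_def by simp
  have f1: "fold (\<lambda>j. phi r j) [2..<Suc 1] P = P" by simp
  show ?case unfolding x1 f1
    using V_rte[OF PV] V_EvenAt[OF PV] V_Hom[OF PV] W_Wrel[OF P] Anti_of_W[OF W_Wrel[OF P] V_EvenAt[OF PV]]
    by simp
next
  case (Suc k)
  note k1 = Suc.hyps(1)
  have kr: "Suc k \<le> r - 1" by (rule Suc.prems)
  have IH: "fold (\<lambda>j. phi r j) [2..<Suc k] P = rte r (Xs r P k)"
     "\<And>v. 1 \<le> v \<Longrightarrow> v \<le> r - k \<Longrightarrow> EvenAt v (Xs r P k)"
     "Hom r (N - r) (Xs r P k)" "k \<le> r - 2 \<Longrightarrow> Wrel (Xs r P k) \<and> Anti (Xs r P k)"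
    using Suc.IH kr by auto
  define s where "s = r - Suc k"
  have s1: "Suc (Suc s) \<le> r" "Suc s = r - k" using kr k1 unfolding s_def by auto
  have "fold (\<lambda>j. phi r j) [2..<Suc (Suc k)] P = phi r (Suc k) (rte r (Xs r P k))"
    using fold_phi_Suc[OF k1] IH(1) by simp
  also have "\<dots> = rte r (Tp s r (rte r (Xs r P k)))"
    unfolding s_def using kr by (intro phi_Tp) auto
  also have "\<dots> = rte r (Tp s r (Xs r P k))"
    by (rule kill_Tp[OF s1(1)]) (use IH(2)[of "Suc s"] s1 in auto)
  also have "Tp s r (Xs r P k) = Xs r P (Suc k)" unfolding s_def using Xs_Suc[OF k1] by simp
  finally have a: "fold (\<lambda>j. phi r j) [2..<Suc (Suc k)] P = rte r (Xs r P (Suc k))" .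
  have b: "EvenAt v (Xs r P (Suc k))" if "1 \<le> v" "v \<le> r - Suc k" for v
    unfolding Xs_Suc[OF k1] by (rule EvenAt_Tp) (use that IH(2) in auto)
  have c: "Hom r (N - r) (Xs r P (Suc k))"
    unfolding Xs_Suc[OF k1] by (rule Hom_Tp[OF IH(3)])
  have d: "Wrel (Xs r P (Suc k)) \<and> Anti (Xs r P (Suc k))" if "Suc k \<le> r - 2"
  proof -
    have "2 \<le> r - Suc k" using that by simp
    thus ?thesis unfolding Xs_Suc[OF k1] using IH(4) that by (auto intro: Wrel_Tp Anti_Tp)
  qed
  show ?case using a b c d by blast
qed

theorem lemma4p11:
  fixes N r :: nat
  assumes "3 \<le> r"
  shows "phi_comp r ` W N r \<subseteq> {Q \<in> V N r. phi r r Q = 0} \<inter> phi_comp r ` V N r"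
proof
  fix Q assume "Q \<in> phi_comp r ` W N r"
  then obtain P where P: "P \<in> W N r" and Q: "Q = phi_comp r P" by blast
  have PV: "P \<in> V N r" using P unfolding W_def by simp
  have r1: "Suc (r - 1) = r" using assms by simp
  have a1: "1 \<le> r - 1" "1 \<le> r - 2" "r - 2 \<le> r - 1" using assms by auto
  note c1 = chain[OF P a1(1) order.refl]
  note c2 = chain[OF P a1(2,3)]
  have Qe: "Q = rte r (Xs r P (r - 1))"
    using c1 unfolding Q phi_comp_def r1 by simp
  have QV: "Q \<in> V N r" unfolding Qe by (rule Hom_V) (use c1 assms in auto)
  have xs: "Xs r P (r - 1) = Tp 1 r (Xs r P (r - 2))"
  proof -
    have "r - 1 = Suc (r - 2)" "1 \<le> r - 2" using assms by auto
    thus ?thesis using Xs_Suc[of "r - 2" r P] by (simp add: numeral_2_eq_2)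
  qed
  have "phi r r Q = rte r (Tp 0 r (rte r (Xs r P (r - 1))))"
    unfolding Qe using assms by (subst phi_Tp) auto
  also have "\<dots> = rte r (Tp 0 r (Xs r P (r - 1)))"
    by (rule kill_Tp) (use c1 assms in auto)
  also have "\<dots> = rte r 0"
    unfolding xs using core[of r "Xs r P (r - 2)"] c2 assms by auto
  finally have "phi r r Q = 0" by simp
  moreover have "Q \<in> phi_comp r ` V N r" using Q PV by blast
  ultimately show "Q \<in> {Q \<in> V N r. phi r r Q = 0} \<inter> phi_comp r ` V N r" using QV by blast
qed


end
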